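(* Let $d=d'+d''$ and, for $\tau=(\tau',\tau'')\in(0,1]^2$, let $g_\tau$ be the metric on $\mathbb{R}^{2d}=\mathbb{R}^{2(d'+d'')}$, with coordinates $X=(q',q'',p)$, $q'\in\mathbb{R}^{d'}$, $q''\in\mathbb{R}^{d''}$, $p\in\mathbb{R}^d$, given by $$g_\tau=\frac{\tau'dq'^2}{\langle\sqrt{\tau'}q'\rangle^2}+\tau''dq''^2+\frac{\tau'\tau''dp^2}{\langle\sqrt{\tau'\tau''}p\rangle^2}.$$ Then the family $(g_\tau)_{\tau\in(0,1]^2}$ is admissible.
   Context: $\langle t\rangle=(1+|t|^2)^{1/2}$. The symplectic form on $\mathbb{R}^{2d}_{q,p}$ is $\sigma(X,X_1)=\sum_j(p^jq_{1,j}-q_jp_1^j)$ for $X=(q,p)$, $X_1=(q_1,p_1)$. For a metric $g$ (a family of positive definite quadratic forms $g_X$, $X\in\mathbb{R}^{2d}$), the dual metric is $g^\sigma_X(T)=\sup_{T_1\neq0}\frac{|\sigma(T,T_1)|^2}{g_X(T_1)}$ and the gain is $\lambda(X)=\inf_{T\ne0}(g^\sigma_X(T)/g_X(T))^{1/2}$. A family $(g_\tau)_{\tau\in\mathcal{T}}$ of metrics is admissible if: (uncertainty) $\lambda_\tau(X)\ge1$ for all $\tau,X$; (slowness) there is $C_1>0$ independent of $\tau$ such that $g_{\tau,X}(X-Y)\le1/C_1$ implies $(g_{\tau,X}/g_{\tau,Y})^{\pm1}\le C_1$ (i.e. $C_1^{-1}g_{\tau,Y}\le g_{\tau,X}\le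 C_1g_{\tau,Y}$ as quadratic forms); (temperance) there are $C_2,N_2>0$ independent of $\tau$ such that for all $X,Y$, $(g_{\tau,X}/g_{\tau,Y})^{\pm1}\le C_2(1+g^\sigma_{\tau,X}(X-Y))^{N_2}$. *)

theory Defs
  imports "HOL-Analysis.Analysis"
begin

type_synonym 'n phase = "(real^'n) \<times> (real^'n)"

definition symp :: "'n::finite phase \<Rightarrow> 'n phase \<Rightarrow> real" where
  "symp X X1 = (\<Sum>j\<in>UNIV. (snd X)$j * (fst X1)$j - (fst X)$j * (snd X1)$j)"

definition is_metric :: "('n::finite phase \<Rightarrow> 'n phase \<Rightarrow> real) \<Rightarrow> bool" where
  "is_metric g \<longleftrightarrow> (\<forall>X. (\<exists>B. bilinear B \<and> (\<forall>T. g X T = B T T)) \<and> (\<forall>T. T \<noteq> 0 \<longrightarrow> g X T > 0))"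

definition dual_metric :: "('n::finite phase \<Rightarrow> 'n phase \<Rightarrow> real) \<Rightarrow> 'n phase \<Rightarrow> 'n phase \<Rightarrow> real" where
  "dual_metric g X T = (SUP T1\<in>-{0}. \<bar>symp T T1\<bar>^2 / g X T1)"

definition gain :: "('n::finite phase \<Rightarrow> 'n phase \<Rightarrow> real) \<Rightarrow> 'n phase \<Rightarrow> real" where
  "gain g X = (INF T\<in>-{0}. sqrt (dual_metric g X T / g X T))"

definition admissible :: "'t set \<Rightarrow> ('t \<Rightarrow> 'n::finite phase \<Rightarrow> 'n phase \<Rightarrow> real) \<Rightarrow> bool" where
  "admissible TT g \<longleftrightarrow>
     (\<forall>\<tau>\<in>TT. is_metric (g \<tau>)) \<and>
     (\<forall>\<tau>\<in>TT. \<forall>X. gain (g \<tau>) X \<ge> 1) \<and>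
     (\<exists>C1>0. \<forall>\<tau>\<in>TT. \<forall>X Y. g \<tau> X (X - Y) \<le> 1 / C1 \<longrightarrow>
        (\<forall>T. g \<tau> Y T / C1 \<le> g \<tau> X T \<and> g \<tau> X T \<le> C1 * g \<tau> Y T)) \<and>
     (\<exists>C2>0. \<exists>N2>0. \<forall>\<tau>\<in>TT. \<forall>X Y T.
        g \<tau> X T \<le> C2 * (1 + dual_metric (g \<tau>) X (X - Y)) powr N2 * g \<tau> Y T \<and>
        g \<tau> Y T \<le> C2 * (1 + dual_metric (g \<tau>) X (X - Y)) powr N2 * g \<tau> X T)"

definition jbr :: "real \<Rightarrow> real" where
  "jbr t = sqrt (1 + t^2)"

definition sub_norm :: "'n::finite set \<Rightarrow> real^'n \<Rightarrow> real" where
  "sub_norm S v = sqrt (\<Sum>i\<in>S. (v$i)^2)"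

text \<open>The metric g_tau, tau = (tau', tau''); the q' coordinates are those indexed by S,
  the q'' coordinates those indexed by -S (so d' = card S, d'' = d - d').
  g_tau X T with X = (q,p), T = (dq,dp).\<close>
definition g_split :: "'n::finite set \<Rightarrow> real \<times> real \<Rightarrow> 'n phase \<Rightarrow> 'n phase \<Rightarrow> real" where
  "g_split S \<tau> X T =
     (let t1 = fst \<tau>; t2 = snd \<tau>; q = fst X; p = snd X; dq = fst T; dp = snd T in
       t1 * (sub_norm S dq)^2 / (jbr (sqrt t1 * sub_norm S q))^2
     + t2 * (sub_norm (-S) dq)^2
     + t1 * t2 * (norm dp)^2 / (jbr (sqrt (t1 * t2) * norm p))^2)"

end

theory Submission imports Defs begin

definition proj :: "'n::finite set \<Rightarrow> real^'n \<Rightarrow> real^'n" where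
  "proj S v = (\<chi> i. if i\<in>S then v$i else 0)"

lemma proj_add: "proj S (v + w) = proj S v + proj S w"
  by (simp add: proj_def vec_eq_iff)
lemma proj_diff: "proj S (v - w) = proj S v - proj S w"
  by (simp add: proj_def vec_eq_iff)
lemma proj_scale: "proj S (c *\<^sub>R v) = c *\<^sub>R proj S v"
  by (simp add: proj_def vec_eq_iff)

lemma sub_norm_proj: "sub_norm S v = norm (proj S v)"
proof -
  have "(\<Sum>i\<in>UNIV. (norm ((proj S v)$i))\<^sup>2) = (\<Sum>i\<in>UNIV. if i\<in>S then (v$i)^2 else 0)"
    by (rule sum.cong) (auto simp: proj_def)
  also have "\<dots> = (\<Sum>i\<in>S. (v$i)^2)"
    by (simp add: sum.If_cases)
  finally show ?thesis by (simp add: sub_norm_def norm_vec_def L2_set_def)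
qed

lemma sub_norm_nonneg: "0 \<le> sub_norm S v" by (simp add: sub_norm_proj)

lemma norm_split: "(norm (v::real^'n::finite))^2 = (sub_norm S v)^2 + (sub_norm (-S) v)^2"
proof -
  have "(norm v)^2 = (\<Sum>i\<in>UNIV. (v$i)^2)"
    by (simp add: norm_vec_def L2_set_def sum_nonneg)
  also have "\<dots> = (\<Sum>i\<in>S. (v$i)^2) + (\<Sum>i\<in>-S. (v$i)^2)"
    by (metis Compl_eq_Diff_UNIV add.commute finite subset_UNIV sum.subset_diff)
  finally show ?thesis by (simp add: sub_norm_def sum_nonneg)
qed

lemma sub_norm_tri: "\<bar>sub_norm S v - sub_norm S w\<bar> \<le> sub_norm S (v - w)"
  by (simp add: sub_norm_proj proj_diff norm_triangle_ineq3)

definition gg :: "'n::finite set \<Rightarrow> real \<Rightarrow> real \<Rightarrow> 'n phase \<Rightarrow> 'n phase \<Rightarrow> real" where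
 "gg S t1 t2 X T = t1/(1+t1*(sub_norm S (fst X))^2) * (sub_norm S (fst T))^2
    + t2 * (sub_norm (-S) (fst T))^2
    + t1*t2/(1+t1*t2*(norm (snd X))^2) * (norm (snd T))^2"

lemma g_eq: assumes "0 < t1" "0 < t2" shows "g_split S (t1,t2) = gg S t1 t2"
  using assms by (simp add: fun_eq_iff g_split_def gg_def jbr_def power_mult_distrib)

lemma symp_inner: "symp T T1 = inner (snd T, - fst T) T1"
  by (cases T1) (simp add: symp_def inner_vec_def inner_prod_def sum_subtractf sum_negf)

lemma norm_J: "norm (snd T, - fst T) = norm T"
  by (simp add: norm_Pair norm_prod_def add.commute)

lemma term_le:
  fixes K A B t s :: real
  assumes "1 \<le> K" "0 < A" "0 < B" "B \<le> K * A" "0 \<le> t" "0 \<le> s"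
  shows "t / A * s \<le> K * (t / B * s)"
proof -
  have "t / A \<le> K * (t / B)"
    using assms by (simp add: field_simps) (metis mult.assoc mult.commute mult_left_mono)
  then show ?thesis using assms(6) by (metis mult.assoc mult_right_mono)
qed

lemma slow_real:
  fixes t x y z :: real
  assumes "0 < t" "0 \<le> x" "0 \<le> y" "\<bar>x - y\<bar> \<le> z" "t / (1 + t*x^2) * z^2 \<le> 1/4"
  shows "1 + t*y^2 \<le> 4 * (1 + t*x^2) \<and> 1 + t*x^2 \<le> 4 * (1 + t*y^2)"
proof -
  have pos: "0 < 1 + t*x^2" using assms by (simp add: add_pos_nonneg)
  have z: "t*z^2 \<le> (1 + t*x^2)/4" using assms(5) pos by (simp add: field_simps)
  have zz: "0 \<le> z" using assms(4) by linarith
  have "y \<le> x + z" "x \<le> y + z" using assms(4) by auto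
  hence "y^2 \<le> (x+z)^2" "x^2 \<le> (y+z)^2" using assms zz by (auto intro: power_mono)
  moreover have "(x+z)^2 \<le> 2*x^2 + 2*z^2" "(y+z)^2 \<le> 2*y^2+2*z^2"
    using zero_le_power2[of "x-z"] zero_le_power2[of "y-z"] by (simp_all add: power2_diff power2_sum)
  ultimately have "t*y^2 \<le> t*(2*x^2 + 2*z^2)" "t*x^2 \<le> t*(2*y^2+2*z^2)"
    using assms(1) by (auto intro!: mult_left_mono)
  then show ?thesis using z by (auto simp: algebra_simps)
qed

lemma peetre_real:
  fixes t x y z :: real
  assumes "0 < t" "0 \<le> x" "0 \<le> y" "\<bar>x - y\<bar> \<le> z"
  shows "1 + t*x^2 \<le> 2 * (1 + t*y^2) * (1 + t*z^2)"
proof -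
  have zz: "0 \<le> z" using assms(4) by linarith
  have "x \<le> y + z" using assms(4) by auto
  hence "x^2 \<le> (y+z)^2" using assms zz by (auto intro: power_mono)
  moreover have "(y+z)^2 \<le> 2*y^2+2*z^2"
    using zero_le_power2[of "y-z"] by (simp add: power2_diff power2_sum)
  ultimately have "t*x^2 \<le> t*(2*y^2+2*z^2)"
    using assms(1) by (auto intro!: mult_left_mono)
  moreover have "0 \<le> t*y^2 * (t*z^2)" using assms by simp
  ultimately show ?thesis by (auto simp: algebra_simps)
qed

context
  fixes S :: "'n::finite set" and t1 t2 :: real
  assumes t1: "0 < t1" "t1 \<le> 1" and t2: "0 < t2" "t2 \<le> 1"
begin

definition "AA X = 1 + t1*(sub_norm S (fst X))^2"
definition "PP X = 1 + t1*t2*(norm (snd X :: real^'n))^2"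

lemma AA_pos: "1 \<le> AA X" using t1 by (simp add: AA_def)
lemma PP_pos: "1 \<le> PP X" using t1 t2 by (simp add: PP_def)

lemma gg_alt: "gg S t1 t2 X T = t1 / AA X * (sub_norm S (fst T))^2 + t2 * (sub_norm (-S) (fst T))^2
   + t1*t2 / PP X * (norm (snd T))^2"
  by (simp add: gg_def AA_def PP_def)

lemma coef_le: "t1 / AA X \<le> 1" "t1*t2 / PP X \<le> 1"
proof -
  have "t1*t2 \<le> 1" using t1 t2 by (simp add: mult_le_one)
  then show "t1 / AA X \<le> 1" "t1*t2 / PP X \<le> 1"
    using AA_pos[of X] PP_pos[of X] t1 t2 by (simp_all add: divide_le_eq_1)
qed

lemma coef_pos: "0 < t1 / AA X" "0 < t1*t2 / PP X"
  using AA_pos[of X] PP_pos[of X] t1 t2 by simp_all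

lemma normT: "(norm (T::'n phase))^2 = (sub_norm S (fst T))^2 + (sub_norm (-S) (fst T))^2 + (norm (snd T))^2"
  by (cases T) (simp add: norm_Pair norm_split[of _ S])

lemma gg_nonneg: "0 \<le> gg S t1 t2 X T"
  unfolding gg_alt using coef_pos[of X] t2
  by (intro add_nonneg_nonneg mult_nonneg_nonneg) auto

lemma gg_le: "gg S t1 t2 X T \<le> (norm T)^2"
proof -
  have "t1 / AA X * (sub_norm S (fst T))^2 \<le> (sub_norm S (fst T))^2"
    by (rule mult_left_le_one_le[OF zero_le_power2 less_imp_le[OF coef_pos(1)] coef_le(1)])
  moreover have "t2 * (sub_norm (-S) (fst T))^2 \<le> (sub_norm (-S) (fst T))^2"
    using t2 by (simp add: mult_left_le_one_le)
  moreover have "t1*t2 / PP X * (norm (snd T))^2 \<le> (norm (snd T))^2"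
    by (rule mult_left_le_one_le[OF zero_le_power2 less_imp_le[OF coef_pos(2)] coef_le(2)])
  ultimately show ?thesis by (simp add: gg_alt normT)
qed

definition "mm X = min (min (t1 / AA X) t2) (t1*t2 / PP X)"

lemma mm_pos: "0 < mm X" using coef_pos[of X] t2 by (simp add: mm_def)

lemma gg_ge: "mm X * (norm T)^2 \<le> gg S t1 t2 X T"
proof -
  have "mm X * (sub_norm S (fst T))^2 \<le> t1 / AA X * (sub_norm S (fst T))^2"
    by (rule mult_right_mono) (auto simp: mm_def)
  moreover have "mm X * (sub_norm (-S) (fst T))^2 \<le> t2 * (sub_norm (-S) (fst T))^2"
    by (rule mult_right_mono) (auto simp: mm_def)
  moreover have "mm X * (norm (snd T))^2 \<le> t1*t2 / PP X * (norm (snd T))^2"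
    by (rule mult_right_mono) (auto simp: mm_def)
  ultimately show ?thesis by (simp add: gg_alt normT distrib_left)
qed

lemma gg_pos: "T \<noteq> 0 \<Longrightarrow> 0 < gg S t1 t2 X T"
  using gg_ge[of X T] mm_pos[of X]
  by (metis norm_eq_zero order_less_le_trans zero_less_norm_iff zero_less_power mult_pos_pos)

lemma bdd: "bdd_above ((\<lambda>T1. \<bar>symp T T1\<bar>^2 / gg S t1 t2 X T1) ` (-{0}))"
proof (rule bdd_aboveI2)
  fix T1 :: "'n phase" assume "T1 \<in> -{0}"
  hence nz: "T1 \<noteq> 0" by auto
  have "\<bar>symp T T1\<bar> \<le> norm T * norm T1"
    using Cauchy_Schwarz_ineq2[of "(snd T, - fst T)" T1] by (simp add: symp_inner norm_J)
  hence "\<bar>symp T T1\<bar>^2 \<le> (norm T * norm T1)^2" by (rule power_mono[OF _ abs_ge_zero])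
  moreover have "mm X * (norm T1)^2 \<le> gg S t1 t2 X T1" by (rule gg_ge)
  moreover have "0 < mm X * (norm T1)^2" using mm_pos[of X] nz by simp
  ultimately have "\<bar>symp T T1\<bar>^2 / gg S t1 t2 X T1 \<le> (norm T * norm T1)^2 / (mm X * (norm T1)^2)"
    by (intro frac_le) auto
  also have "\<dots> = (norm T)^2 / mm X" using nz mm_pos[of X] by (simp add: field_simps power_mult_distrib)
  finally show "\<bar>symp T T1\<bar>^2 / gg S t1 t2 X T1 \<le> (norm T)^2 / mm X" .
qed

lemma nz_elem: "((axis k 1, 0) :: 'n phase) \<in> -{0}"
  by (simp add: prod_eq_iff)

lemma dual_ge: "(norm T)^2 \<le> dual_metric (gg S t1 t2) X T"
proof (cases "T = 0")
  case True
  have "\<bar>symp T (axis k 1, 0)\<bar>^2 / gg S t1 t2 X (axis k 1, 0) \<le> dual_metric (gg S t1 t2) X T"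
    unfolding dual_metric_def by (rule cSUP_upper[OF nz_elem bdd])
  then show ?thesis using True by (simp add: symp_def)
next
  case False
  let ?J = "(snd T, - fst T)"
  have Jnz: "?J \<in> -{0}" using False norm_J[of T] by (auto simp del: norm_J)
  have sJ: "symp T ?J = (norm T)^2" by (cases T) (simp add: symp_inner power2_norm_eq_inner)
  have gp: "0 < gg S t1 t2 X ?J" using Jnz by (intro gg_pos) auto
  have gl: "gg S t1 t2 X ?J \<le> (norm T)^2" using gg_le[of X ?J] norm_J[of T] by simp
  have "(norm T)^2 = ((norm T)^2)^2 / (norm T)^2" using False by (simp add: power2_eq_square)
  also have "\<dots> \<le> ((norm T)^2)^2 / gg S t1 t2 X ?J"
    by (rule divide_left_mono[OF gl]) (use gp False in auto)
  also have "\<dots> = \<bar>symp T ?J\<bar>^2 / gg S t1 t2 X ?J" by (simp add: sJ)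
  also have "\<dots> \<le> dual_metric (gg S t1 t2) X T"
    unfolding dual_metric_def by (rule cSUP_upper[OF Jnz bdd])
  finally show ?thesis .
qed

lemma compare:
  assumes K: "1 \<le> K" and A: "AA Y \<le> K * AA X" and P: "PP Y \<le> K * PP X"
  shows "gg S t1 t2 X T \<le> K * gg S t1 t2 Y T"
proof -
  have "t1 / AA X * (sub_norm S (fst T))^2 \<le> K * (t1 / AA Y * (sub_norm S (fst T))^2)"
    by (rule term_le[OF K _ _ A]) (use AA_pos[of X] AA_pos[of Y] t1 in auto)
  moreover have "t1*t2 / PP X * (norm (snd T))^2 \<le> K * (t1*t2 / PP Y * (norm (snd T))^2)"
    by (rule term_le[OF K _ _ P]) (use PP_pos[of X] PP_pos[of Y] t1 t2 in auto)
  moreover have "t2 * (sub_norm (-S) (fst T))^2 \<le> K * (t2 * (sub_norm (-S) (fst T))^2)"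
    using mult_right_mono[OF K, of "t2 * (sub_norm (-S) (fst T))^2"] t2 by simp
  ultimately show ?thesis by (simp add: gg_alt distrib_left)
qed

lemma metric: "is_metric (gg S t1 t2)"
  unfolding is_metric_def
proof (intro allI conjI impI)
  fix X :: "'n phase"
  define B where "B = (\<lambda>T T1::'n phase. t1 / AA X * (proj S (fst T) \<bullet> proj S (fst T1))
     + t2 * (proj (-S) (fst T) \<bullet> proj (-S) (fst T1)) + t1*t2 / PP X * (snd T \<bullet> snd T1))"
  have "bilinear B"
    unfolding bilinear_def B_def
    by (auto intro!: linearI simp: proj_add proj_scale inner_add_left inner_add_right algebra_simps add_divide_distrib)
  moreover have "\<forall>T. gg S t1 t2 X T = B T T"
    by (simp add: B_def gg_alt sub_norm_proj power2_norm_eq_inner)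
  ultimately show "\<exists>B. bilinear B \<and> (\<forall>T. gg S t1 t2 X T = B T T)" by blast
next
  fix X T :: "'n phase" assume "T \<noteq> 0" thus "0 < gg S t1 t2 X T" by (rule gg_pos)
qed

lemma gain_ge: "1 \<le> gain (gg S t1 t2) X"
  unfolding gain_def
proof (rule cINF_greatest)
  show "-{0} \<noteq> ({}::'n phase set)" using nz_elem by blast
next
  fix T :: "'n phase" assume "T \<in> -{0}"
  hence gp: "0 < gg S t1 t2 X T" by (intro gg_pos) auto
  have "gg S t1 t2 X T \<le> dual_metric (gg S t1 t2) X T"
    using gg_le[of X T] dual_ge[of T X] by linarith
  thus "1 \<le> sqrt (dual_metric (gg S t1 t2) X T / gg S t1 t2 X T)"
    using gp by simp
qed

lemma slow:
  assumes "gg S t1 t2 X (X - Y) \<le> 1/4"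
  shows "AA Y \<le> 4 * AA X \<and> AA X \<le> 4 * AA Y \<and> PP Y \<le> 4 * PP X \<and> PP X \<le> 4 * PP Y"
proof -
  have n: "0 \<le> t1 / AA X * (sub_norm S (fst (X-Y)))^2" "0 \<le> t2 * (sub_norm (-S) (fst (X-Y)))^2"
     "0 \<le> t1*t2 / PP X * (norm (snd (X-Y)))^2"
    by (metis coef_pos less_imp_le mult_nonneg_nonneg zero_le_power2,
        use t2 in simp,
        metis coef_pos less_imp_le mult_nonneg_nonneg zero_le_power2)
  have a: "t1 / AA X * (sub_norm S (fst X - fst Y))^2 \<le> 1/4"
    using assms n unfolding gg_alt fst_diff snd_diff by linarith
  have p: "t1*t2 / PP X * (norm (snd X - snd Y))^2 \<le> 1/4"
    using assms n unfolding gg_alt fst_diff snd_diff by linarith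
  have "1 + t1*(sub_norm S (fst Y))^2 \<le> 4 * (1 + t1*(sub_norm S (fst X))^2) \<and>
        1 + t1*(sub_norm S (fst X))^2 \<le> 4 * (1 + t1*(sub_norm S (fst Y))^2)"
    by (rule slow_real[OF t1(1) sub_norm_nonneg sub_norm_nonneg sub_norm_tri])
       (use a in \<open>simp add: AA_def\<close>)
  moreover have "1 + t1*t2*(norm (snd Y))^2 \<le> 4 * (1 + t1*t2*(norm (snd X))^2) \<and>
        1 + t1*t2*(norm (snd X))^2 \<le> 4 * (1 + t1*t2*(norm (snd Y))^2)"
    by (rule slow_real[OF _ norm_ge_zero norm_ge_zero norm_triangle_ineq3])
       (use p t1 t2 in \<open>simp_all add: PP_def\<close>)
  ultimately show ?thesis by (simp add: AA_def PP_def)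
qed

lemma aux2: "(a::real) \<le> 2*b*c \<Longrightarrow> 0 \<le> b \<Longrightarrow> c - 1 \<le> D \<Longrightarrow> a \<le> 2*(1+D)*b"
proof -
  assume h: "a \<le> 2*b*c" "0 \<le> b" "c - 1 \<le> D"
  have "2*b*c \<le> 2*b*(1+D)" using h by (intro mult_left_mono) auto
  thus ?thesis using h by (simp add: algebra_simps)
qed

lemma temper:
  fixes X Y :: "'n phase"
  defines "D \<equiv> dual_metric (gg S t1 t2) X (X - Y)"
  shows "AA Y \<le> 2*(1+D) * AA X \<and> AA X \<le> 2*(1+D) * AA Y \<and> PP Y \<le> 2*(1+D) * PP X \<and> PP X \<le> 2*(1+D) * PP Y"
proof -
  have D: "(norm (X-Y))^2 \<le> D" unfolding D_def by (rule dual_ge)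
  have "(norm (X - Y))^2 = (sub_norm S (fst X - fst Y))^2 + (sub_norm (-S) (fst X - fst Y))^2 + (norm (snd X - snd Y))^2"
    using normT[of "X-Y"] by simp
  hence d1: "(sub_norm S (fst X - fst Y))^2 \<le> D" and d2: "(norm (snd X - snd Y))^2 \<le> D"
    using D zero_le_power2[of "sub_norm (-S) (fst X - fst Y)"] zero_le_power2[of "sub_norm S (fst X - fst Y)"]
      zero_le_power2[of "norm (snd X - snd Y)"] by linarith+
  have t12: "t1*t2 \<le> 1" using t1 t2 by (simp add: mult_le_one)
  have e1: "t1 * (sub_norm S (fst X - fst Y))^2 \<le> D"
    using d1 mult_left_le_one_le[OF zero_le_power2 less_imp_le[OF t1(1)] t1(2), of "sub_norm S (fst X - fst Y)"] by linarith
  have e2: "t1 * t2 * (norm (snd X - snd Y))^2 \<le> D"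
    using d2 mult_left_le_one_le[OF zero_le_power2 _ t12, of "norm (snd X - snd Y)"] t1 t2 by simp
  have m: "sub_norm S (fst Y - fst X) = sub_norm S (fst X - fst Y)"
    by (simp add: sub_norm_proj proj_diff norm_minus_commute)
  have m2: "norm (snd Y - snd X) = norm (snd X - snd Y)" by (rule norm_minus_commute)
  have p1: "1 + t1*(sub_norm S (fst Y))^2 \<le> 2 * (1 + t1*(sub_norm S (fst X))^2) * (1 + t1*(sub_norm S (fst X - fst Y))^2)"
    using peetre_real[OF t1(1) sub_norm_nonneg sub_norm_nonneg sub_norm_tri, of S "fst Y" "fst X"] m by simp
  have p2: "1 + t1*(sub_norm S (fst X))^2 \<le> 2 * (1 + t1*(sub_norm S (fst Y))^2) * (1 + t1*(sub_norm S (fst X - fst Y))^2)"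
    by (rule peetre_real[OF t1(1) sub_norm_nonneg sub_norm_nonneg sub_norm_tri])
  have t12p: "0 < t1*t2" using t1 t2 by simp
  have p3: "1 + t1*t2*(norm (snd Y))^2 \<le> 2 * (1 + t1*t2*(norm (snd X))^2) * (1 + t1*t2*(norm (snd X - snd Y))^2)"
    using peetre_real[OF t12p norm_ge_zero norm_ge_zero norm_triangle_ineq3, of "snd Y" "snd X"] m2 by simp
  have p4: "1 + t1*t2*(norm (snd X))^2 \<le> 2 * (1 + t1*t2*(norm (snd Y))^2) * (1 + t1*t2*(norm (snd X - snd Y))^2)"
    by (rule peetre_real[OF t12p norm_ge_zero norm_ge_zero norm_triangle_ineq3])
  have q1: "AA Y \<le> 2*(1+D) * AA X"
    unfolding AA_def by (rule aux2[OF p1]) (use t1 e1 in auto)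
  have q2: "AA X \<le> 2*(1+D) * AA Y"
    unfolding AA_def by (rule aux2[OF p2]) (use t1 e1 in auto)
  have q3: "PP Y \<le> 2*(1+D) * PP X"
    unfolding PP_def by (rule aux2[OF p3]) (use t12p e2 in auto)
  have q4: "PP X \<le> 2*(1+D) * PP Y"
    unfolding PP_def by (rule aux2[OF p4]) (use t12p e2 in auto)
  show ?thesis using q1 q2 q3 q4 by blast
qed

lemma slow_g:
  assumes "gg S t1 t2 X (X - Y) \<le> 1/4"
  shows "gg S t1 t2 Y T / 4 \<le> gg S t1 t2 X T \<and> gg S t1 t2 X T \<le> 4 * gg S t1 t2 Y T"
proof -
  note h = slow[OF assms]
  have "gg S t1 t2 X T \<le> 4 * gg S t1 t2 Y T" by (rule compare) (use h in auto)
  moreover have "gg S t1 t2 Y T \<le> 4 * gg S t1 t2 X T" by (rule compare) (use h in auto)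
  ultimately show ?thesis by simp
qed

lemma temper_g:
  fixes X Y T :: "'n phase"
  shows "gg S t1 t2 X T \<le> 2 * (1 + dual_metric (gg S t1 t2) X (X - Y)) powr 1 * gg S t1 t2 Y T \<and>
         gg S t1 t2 Y T \<le> 2 * (1 + dual_metric (gg S t1 t2) X (X - Y)) powr 1 * gg S t1 t2 X T"
proof -
  let ?D = "dual_metric (gg S t1 t2) X (X - Y)"
  have D0: "0 \<le> ?D" using dual_ge[of "X - Y" X] zero_le_power2[of "norm (X-Y)"] by linarith
  hence pw: "(1 + ?D) powr 1 = 1 + ?D" by (simp add: powr_one)
  note h = temper[where X=X and Y=Y]
  have K: "1 \<le> 2 * (1 + ?D)" using D0 by simp
  have "gg S t1 t2 X T \<le> (2 * (1 + ?D)) * gg S t1 t2 Y T"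
    by (rule compare[OF K]) (use h in \<open>simp_all add: algebra_simps\<close>)
  moreover have "gg S t1 t2 Y T \<le> (2 * (1 + ?D)) * gg S t1 t2 X T"
    by (rule compare[OF K]) (use h in \<open>simp_all add: algebra_simps\<close>)
  ultimately show ?thesis using D0 by (simp add: abs_of_nonneg algebra_simps)
qed

end

theorem propositionA9:
  fixes S :: "'n::finite set"
  shows "admissible {\<tau>::real\<times>real. 0 < fst \<tau> \<and> fst \<tau> \<le> 1 \<and> 0 < snd \<tau> \<and> snd \<tau> \<le> 1}
           (g_split S)"
  unfolding admissible_def
proof (intro conjI)
  let ?TT = "{\<tau>::real\<times>real. 0 < fst \<tau> \<and> fst \<tau> \<le> 1 \<and> 0 < snd \<tau> \<and> snd \<tau> \<le> 1}"
  have rep: "\<tau> \<in> ?TT \<Longrightarrow> g_split S \<tau> = gg S (fst \<tau>) (snd \<tau>)" for \<tau>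
    using g_eq[of "fst \<tau>" "snd \<tau>" S] by simp
  show "\<forall>\<tau>\<in>?TT. is_metric (g_split S \<tau>)"
    using rep metric by auto
  show "\<forall>\<tau>\<in>?TT. \<forall>X. 1 \<le> gain (g_split S \<tau>) X"
    using rep gain_ge by auto
  show "\<exists>C1>0. \<forall>\<tau>\<in>?TT. \<forall>X Y. g_split S \<tau> X (X - Y) \<le> 1 / C1 \<longrightarrow>
        (\<forall>T. g_split S \<tau> Y T / C1 \<le> g_split S \<tau> X T \<and> g_split S \<tau> X T \<le> C1 * g_split S \<tau> Y T)"
  proof (intro exI[of _ 4] conjI ballI allI impI)
    fix \<tau> X Y T assume tt: "\<tau> \<in> ?TT" and h: "g_split S \<tau> X (X - Y) \<le> 1 / 4"
    have "gg S (fst \<tau>) (snd \<tau>) X (X - Y) \<le> 1/4" using h rep[OF tt] by simp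
    from slow_g[OF _ _ _ _ this, of T] tt rep[OF tt]
    show "g_split S \<tau> Y T / 4 \<le> g_split S \<tau> X T" "g_split S \<tau> X T \<le> 4 * g_split S \<tau> Y T"
      by auto
  qed simp
  show "\<exists>C2>0. \<exists>N2>0. \<forall>\<tau>\<in>?TT. \<forall>X Y T.
        g_split S \<tau> X T \<le> C2 * (1 + dual_metric (g_split S \<tau>) X (X - Y)) powr N2 * g_split S \<tau> Y T \<and>
        g_split S \<tau> Y T \<le> C2 * (1 + dual_metric (g_split S \<tau>) X (X - Y)) powr N2 * g_split S \<tau> X T"
  proof (rule exI[of _ "2::real"], rule conjI, simp, rule exI[of _ "1::real"], intro conjI ballI allI)
    fix \<tau> X Y T assume tt: "\<tau> \<in> ?TT"
    from temper_g[of "fst \<tau>" "snd \<tau>" S X T Y] tt rep[OF tt]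
    show "g_split S \<tau> X T \<le> 2 * (1 + dual_metric (g_split S \<tau>) X (X - Y)) powr 1 * g_split S \<tau> Y T"
      "g_split S \<tau> Y T \<le> 2 * (1 + dual_metric (g_split S \<tau>) X (X - Y)) powr 1 * g_split S \<tau> X T"
      by auto
  qed simp_all
qed

end
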